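(* Let $d\ge2$ and $x\in X_d$. If for every grid $y\in\pi^{-1}(x)$ the closure $\overline{A_{d,x}y}\subset\pi^{-1}(x)$ contains an FL grid, then $x$ is GFL. In particular, if for every grid $y\in\pi^{-1}(x)$ the closure $\overline{A_{d,x}y}$ contains a rational grid, then $x$ is GFL.
   Context: $X_d$ is the space of unimodular lattices in $\mathbb{R}^d$, $Y_d$ the space of grids $x+v$ ($x\in X_d$, $v\in\mathbb{R}^d$), $\pi(x+v)=x$; the fiber $\pi^{-1}(x)$ is the torus $\mathbb{R}^d/x$. $A_d$ is the group of positive diagonal $d\times d$ matrices of determinant one, acting by $a(x+v)=ax+av$; $A_{d,x}$ is the stabilizer of $x$ in $A_d$, which acts on $\pi^{-1}(x)$. For $w\in\mathbb{R}^d$, $N(w)=\prod_iw_i$; $N(y)=\inf\{|N(w)|:w\in y\}$; $n(x+v)=x+nv$. A grid $y$ is FL if $N(ny)=0$ for some nonzero integer $n$. A lattice $x$ is GFL if every $y\in\pi^{-1}(x)$ is FL. A grid $y$ is rational if it is a torsion point of the torus $\pi^{-1}(\pi(y))$. *)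

theory Defs
  imports "HOL-Analysis.Analysis"
begin

text \<open>Vectors in R^d are modelled as real^'n with d = CARD('n).
  Lattices and grids are modelled as subsets of real^'n.\<close>

definition unimodular_lattice :: "(real^'n) set \<Rightarrow> bool" where
  "unimodular_lattice x \<longleftrightarrow>
     (\<exists>M :: real^'n^'n. \<bar>det M\<bar> = 1 \<and>
        x = (\<lambda>k. M *v k) ` {k. \<forall>i. k $ i \<in> \<int>})"

definition grid_of :: "(real^'n) set \<Rightarrow> real^'n \<Rightarrow> (real^'n) set" where
  "grid_of x v = (\<lambda>w. v + w) ` x"

definition fiber :: "(real^'n) set \<Rightarrow> (real^'n) set set" where
  "fiber x = {grid_of x v | v. True}"

definition diag_group :: "(real^'n^'n) set" where
  "diag_group = {a. (\<forall>i j. i \<noteq> j \<longrightarrow> a $ i $ j = 0) \<and> (\<forall>i. a $ i $ i > 0) \<and> det a = 1}"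

definition stab :: "(real^'n) set \<Rightarrow> (real^'n^'n) set" where
  "stab x = {a \<in> diag_group. (\<lambda>w. a *v w) ` x = x}"

definition normN :: "real^'n \<Rightarrow> real" where
  "normN w = (\<Prod>i\<in>UNIV. w $ i)"

definition gridN :: "(real^'n) set \<Rightarrow> real" where
  "gridN y = Inf ((\<lambda>w. \<bar>normN w\<bar>) ` y)"

definition FL :: "(real^'n) set \<Rightarrow> bool" where
  "FL y \<longleftrightarrow> (\<exists>x v. unimodular_lattice x \<and> y = grid_of x v \<and>
      (\<exists>n::int. n \<noteq> 0 \<and> gridN (grid_of x (of_int n *\<^sub>R v)) = 0))"

definition GFL :: "(real^'n) set \<Rightarrow> bool" where
  "GFL x \<longleftrightarrow> (\<forall>y \<in> fiber x. FL y)"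

text \<open>Rational grids: torsion points of the torus R^d / x.\<close>
definition rational_grid :: "(real^'n) set \<Rightarrow> bool" where
  "rational_grid y \<longleftrightarrow> (\<exists>x v. unimodular_lattice x \<and> y = grid_of x v \<and>
      (\<exists>n::nat. n > 0 \<and> of_nat n *\<^sub>R v \<in> x))"

text \<open>Closure of the orbit A_{d,x} y inside the torus pi^{-1}(x) = R^d/x:
  x + u lies in it iff for every e > 0 some translate a y (a in A_{d,x})
  has a point within distance e of u (i.e. the torus distance is < e).\<close>
definition orbit_closure :: "(real^'n) set \<Rightarrow> (real^'n) set \<Rightarrow> (real^'n) set set" where
  "orbit_closure x y = {grid_of x u | u.
      \<forall>e>0. \<exists>a \<in> stab x. \<exists>p \<in> (\<lambda>w. a *v w) ` y. dist p u < e}"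

end

theory Submission
  imports Defs
begin

lemma lat_int_closed:
  assumes "unimodular_lattice (x :: (real^'n) set)"
  shows "0 \<in> x" and "\<And>a b. a \<in> x \<Longrightarrow> b \<in> x \<Longrightarrow> a + b \<in> x"
    and "\<And>a b. a \<in> x \<Longrightarrow> b \<in> x \<Longrightarrow> a - b \<in> x"
    and "\<And>a (m::int). a \<in> x \<Longrightarrow> of_int m *\<^sub>R a \<in> x"
proof -
  obtain M :: "real^'n^'n" where xM: "x = (\<lambda>k. M *v k) ` {k. \<forall>i. k $ i \<in> \<int>}"
    using assms unfolding unimodular_lattice_def by blast
  show "0 \<in> x" unfolding xM by (rule image_eqI[of _ _ 0]) auto
  show "\<And>a b. a \<in> x \<Longrightarrow> b \<in> x \<Longrightarrow> a + b \<in> x"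
  proof -
    fix a b assume "a \<in> x" "b \<in> x"
    then obtain k l where "a = M *v k" "b = M *v l" "\<forall>i. k $ i \<in> \<int>" "\<forall>i. l $ i \<in> \<int>"
      unfolding xM by auto
    then show "a + b \<in> x" unfolding xM
      by (intro image_eqI[of _ _ "k + l"]) (auto simp: matrix_vector_right_distrib)
  qed
  show "\<And>a b. a \<in> x \<Longrightarrow> b \<in> x \<Longrightarrow> a - b \<in> x"
  proof -
    fix a b assume "a \<in> x" "b \<in> x"
    then obtain k l where "a = M *v k" "b = M *v l" "\<forall>i. k $ i \<in> \<int>" "\<forall>i. l $ i \<in> \<int>"
      unfolding xM by auto
    then show "a - b \<in> x" unfolding xM
      by (intro image_eqI[of _ _ "k - l"]) (auto simp: matrix_vector_mult_diff_distrib)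
  qed
  show "\<And>a (m::int). a \<in> x \<Longrightarrow> of_int m *\<^sub>R a \<in> x"
  proof -
    fix a and m :: int assume "a \<in> x"
    then obtain k where "a = M *v k" "\<forall>i. k $ i \<in> \<int>"
      unfolding xM by auto
    then show "of_int m *\<^sub>R a \<in> x" unfolding xM
      by (intro image_eqI[of _ _ "of_int m *\<^sub>R k"]) (auto simp: matrix_vector_mult_scaleR)
  qed
qed

lemma grid_shift:
  assumes "unimodular_lattice x" "u - v \<in> x"
  shows "grid_of x u = grid_of x v"
proof -
  note L = lat_int_closed[OF assms(1)]
  have "grid_of x u \<subseteq> grid_of x v" if "u - v \<in> x" for u v
  proof
    fix p assume "p \<in> grid_of x u"
    then obtain w where "w \<in> x" "p = u + w" unfolding grid_of_def by auto
    then show "p \<in> grid_of x v" unfolding grid_of_def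
      by (intro image_eqI[of _ _ "(u - v) + w"]) (auto intro: L(2) that)
  qed
  moreover have "v - u \<in> x" using L(3)[OF L(1) assms(2)] by simp
  ultimately show ?thesis using assms(2) by blast
qed

lemma grid_unique:
  assumes "unimodular_lattice x" "unimodular_lattice x'" "grid_of x v = grid_of x' v'"
  shows "x' = x" "v' - v \<in> x"
proof -
  note L = lat_int_closed[OF assms(1)] and L' = lat_int_closed[OF assms(2)]
  have "v' \<in> grid_of x' v'" unfolding grid_of_def using L'(1) by force
  then have "v' \<in> grid_of x v" using assms(3) by simp
  then obtain w0 where w0: "w0 \<in> x" "v' = v + w0" unfolding grid_of_def by auto
  then show "v' - v \<in> x" by simp
  have "v \<in> grid_of x v" unfolding grid_of_def using L(1) by force
  then have "v \<in> grid_of x' v'" using assms(3) by simp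
  then obtain w1 where w1: "w1 \<in> x'" "v = v' + w1" unfolding grid_of_def by auto
  show "x' = x"
  proof
    show "x' \<subseteq> x"
    proof
      fix w assume "w \<in> x'"
      then have "v' + w \<in> grid_of x v" using assms(3) unfolding grid_of_def by auto
      then obtain q where "q \<in> x" "v' + w = v + q" unfolding grid_of_def by auto
      then have "w = q - w0" using w0 by (simp add: algebra_simps)
      then show "w \<in> x" using L(3) \<open>q \<in> x\<close> w0(1) by simp
    qed
    show "x \<subseteq> x'"
    proof
      fix w assume "w \<in> x"
      then have "v + w \<in> grid_of x' v'" using assms(3)[symmetric] unfolding grid_of_def by auto
      then obtain q where "q \<in> x'" "v + w = v' + q" unfolding grid_of_def by auto
      then have "w = q - w1" using w1 by (simp add: algebra_simps)
      then show "w \<in> x'" using L'(3) \<open>q \<in> x'\<close> w1(1) by simp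
    qed
  qed
qed

lemma inf_zero_iff:
  fixes f :: "'a \<Rightarrow> real"
  assumes "G \<noteq> {}" "\<And>g. f g \<ge> 0"
  shows "Inf (f ` G) = 0 \<longleftrightarrow> (\<forall>e>0. \<exists>g\<in>G. f g < e)"
proof
  have bdd: "bdd_below (f ` G)" unfolding bdd_below_def using assms(2) by auto
  assume "Inf (f ` G) = 0"
  then show "\<forall>e>0. \<exists>g\<in>G. f g < e"
    using cInf_less_iff[of "f ` G"] assms(1) bdd by auto
next
  assume H: "\<forall>e>0. \<exists>g\<in>G. f g < e"
  have ge: "Inf (f ` G) \<ge> 0" using assms by (intro cInf_greatest) auto
  have "\<not> Inf (f ` G) > 0"
  proof
    assume "Inf (f ` G) > 0"
    then obtain g where "g \<in> G" "f g < Inf (f ` G)" using H by blast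
    moreover have "Inf (f ` G) \<le> f g" using assms(2) \<open>g \<in> G\<close>
      by (intro cInf_lower) (auto simp: bdd_below_def)
    ultimately show False by simp
  qed
  then show "Inf (f ` G) = 0" using ge by simp
qed

lemma normN_diag:
  assumes "a \<in> diag_group"
  shows "normN (a *v q) = normN q"
proof -
  have off: "\<And>i j. i \<noteq> j \<Longrightarrow> a $ i $ j = 0" and d: "det a = 1"
    using assms unfolding diag_group_def by auto
  have comp: "(a *v q) $ i = a $ i $ i * q $ i" for i
  proof -
    have "(a *v q) $ i = (\<Sum>j\<in>UNIV. a $ i $ j * q $ j)"
      by (simp add: matrix_vector_mult_def)
    also have "\<dots> = a $ i $ i * q $ i"
      by (subst sum.remove[of _ i]) (auto simp: off)
    finally show ?thesis .
  qed
  have "normN (a *v q) = (\<Prod>i\<in>UNIV. a $ i $ i) * normN q"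
    unfolding normN_def comp by (simp add: prod.distrib)
  also have "(\<Prod>i\<in>UNIV. a $ i $ i) = 1" using det_diagonal[of a] off d by simp
  finally show ?thesis by simp
qed

lemma normN_cont: "isCont normN c"
  unfolding normN_def by (intro continuous_intros)

lemma grid_ne: "unimodular_lattice x \<Longrightarrow> grid_of x v \<noteq> {}"
  using lat_int_closed(1) unfolding grid_of_def by blast

lemma gridN_zero_iff:
  assumes "unimodular_lattice x"
  shows "gridN (grid_of x v) = 0 \<longleftrightarrow> (\<forall>e>0. \<exists>w\<in>x. \<bar>normN (v + w)\<bar> < e)"
  unfolding gridN_def using inf_zero_iff[OF grid_ne[OF assms, of v], of "\<lambda>w. \<bar>normN w\<bar>"]
  by (auto simp: grid_of_def)

lemma main_step:
  fixes x :: "(real^'n) set"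
  assumes lat: "unimodular_lattice x"
    and close: "\<forall>e>0. \<exists>a \<in> stab x. \<exists>p \<in> (\<lambda>w. a *v w) ` grid_of x v. dist p u < e"
    and z: "gridN (grid_of x (of_int n *\<^sub>R u)) = 0" and n: "n \<noteq> 0"
  shows "gridN (grid_of x (of_int n *\<^sub>R v)) = 0"
  unfolding gridN_zero_iff[OF lat]
proof (intro allI impI)
  note L = lat_int_closed[OF lat]
  fix e :: real assume e: "e > 0"
  obtain w where w: "w \<in> x" "\<bar>normN (of_int n *\<^sub>R u + w)\<bar> < e/2"
    using z e unfolding gridN_zero_iff[OF lat] by (meson half_gt_zero)
  define c where "c = of_int n *\<^sub>R u + w"
  obtain d where d: "d > 0" "\<And>q. dist q c < d \<Longrightarrow> dist (normN q) (normN c) < e/2"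
    using normN_cont[of c] e unfolding continuous_at_eps_delta by (meson half_gt_zero)
  have nn: "\<bar>real_of_int n\<bar> > 0" using n by simp
  obtain a p where a: "a \<in> stab x" and p: "p \<in> (\<lambda>w. a *v w) ` grid_of x v"
    and pd: "dist p u < d / \<bar>real_of_int n\<bar>"
    using close d(1) nn by (meson divide_pos_pos)
  obtain l where l: "l \<in> x" "p = a *v (v + l)" using p unfolding grid_of_def by auto
  have ad: "a \<in> diag_group" and ax: "(\<lambda>w. a *v w) ` x = x" using a unfolding stab_def by auto
  obtain w' where w': "w' \<in> x" "w = a *v w'" using w(1) ax by (metis imageE)
  define q where "q = of_int n *\<^sub>R p + w"
  have "dist q c = \<bar>real_of_int n\<bar> * dist p u"
    unfolding q_def c_def dist_norm
    by (metis add_diff_cancel_right norm_scaleR scaleR_right_diff_distrib)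
  also have "\<dots> < d" using pd nn by (simp add: field_simps)
  finally have "dist (normN q) (normN c) < e/2" by (rule d(2))
  then have qe: "\<bar>normN q\<bar> < e" using w(2) unfolding c_def dist_real_def by linarith
  have "q = a *v (of_int n *\<^sub>R v + (of_int n *\<^sub>R l + w'))"
    unfolding q_def l w' by (simp add: algebra_simps)
  then have "normN q = normN (of_int n *\<^sub>R v + (of_int n *\<^sub>R l + w'))"
    using normN_diag[OF ad] by simp
  moreover have "of_int n *\<^sub>R l + w' \<in> x" using L(2)[OF L(4)[OF l(1)] w'(1)] .
  ultimately show "\<exists>w\<in>x. \<bar>normN (of_int n *\<^sub>R v + w)\<bar> < e" using qe by metis
qed

lemma rational_FL: "rational_grid z \<Longrightarrow> FL z"
proof -
  assume "rational_grid z"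
  then obtain x v n where x: "unimodular_lattice x" "z = grid_of x v" "n > (0::nat)"
    "of_nat n *\<^sub>R v \<in> x" unfolding rational_grid_def by blast
  have "grid_of x (of_int (int n) *\<^sub>R v) = grid_of x 0"
    using grid_shift[OF x(1)] x(4) by simp
  also have "\<dots> = x" unfolding grid_of_def by simp
  finally have eq: "grid_of x (of_int (int n) *\<^sub>R v) = x" .
  have "gridN x = 0" unfolding gridN_def
    using lat_int_closed(1)[OF x(1)]
    by (intro cInf_eq_minimum[of 0]) (auto simp: normN_def image_iff intro!: bexI[of _ 0])
  then show "FL z" unfolding FL_def using x eq
    by (intro exI[of _ x] exI[of _ v]) (auto intro!: exI[of _ "int n"])
qed

theorem lemma4p4:
  fixes x :: "(real^'n) set"
  assumes "CARD('n) \<ge> 2"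
    and "unimodular_lattice x"
  shows "((\<forall>y \<in> fiber x. \<exists>z \<in> orbit_closure x y. FL z) \<longrightarrow> GFL x)
       \<and> ((\<forall>y \<in> fiber x. \<exists>z \<in> orbit_closure x y. rational_grid z) \<longrightarrow> GFL x)"
proof -
  have A: "GFL x" if H: "\<forall>y \<in> fiber x. \<exists>z \<in> orbit_closure x y. FL z"
    unfolding GFL_def
  proof
    fix y assume "y \<in> fiber x"
    then obtain v where y: "y = grid_of x v" unfolding fiber_def by auto
    obtain z where zc: "z \<in> orbit_closure x y" and fz: "FL z" using H \<open>y \<in> fiber x\<close> by blast
    obtain u where zu: "z = grid_of x u"
      and cl: "\<forall>e>0. \<exists>a \<in> stab x. \<exists>p \<in> (\<lambda>w. a *v w) ` y. dist p u < e"
      using zc unfolding orbit_closure_def by blast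
    obtain x' u' n where x': "unimodular_lattice x'" "z = grid_of x' u'" "n \<noteq> (0::int)"
      "gridN (grid_of x' (of_int n *\<^sub>R u')) = 0" using fz unfolding FL_def by blast
    have "grid_of x u = grid_of x' u'" using zu x'(2) by simp
    then have "x' = x" "u' - u \<in> x" using grid_unique[OF assms(2) x'(1)] by auto
    then have "grid_of x' (of_int n *\<^sub>R u') = grid_of x (of_int n *\<^sub>R u)"
      using grid_shift[OF assms(2)] lat_int_closed(4)[OF assms(2), of "u' - u" n]
      by (simp add: scaleR_right_diff_distrib)
    then have "gridN (grid_of x (of_int n *\<^sub>R v)) = 0"
      using main_step[OF assms(2) cl[unfolded y] _ x'(3)] x'(4) by simp
    then show "FL y" unfolding FL_def using y assms(2) x'(3) by blast
  qed
  moreover have "GFL x" if "\<forall>y \<in> fiber x. \<exists>z \<in> orbit_closure x y. rational_grid z"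
    using A that rational_FL by blast
  ultimately show ?thesis by blast
qed

end
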